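(* Let $m\ge1$ and let $\mathcal{Y}$ be a subset of the group $\mathbb{U}_m(\mathbb{Q})$ of upper unitriangular $m\times m$ rational matrices such that the heights of the matrices in $\mathcal{Y}$ are bounded by a constant. Let $s_1:=\min\{d\in\mathbb{Z}_{>0}: dY\text{ has integer entries for all }Y\in\mathcal{Y}\}$. Then for any positive integer $t$ and any $Y_1,\dots,Y_t\in\mathcal{Y}$, the matrix $s_1^{m-1}Y_1\cdots Y_t$ has integer entries.
   Context: Upper unitriangular means upper triangular with all diagonal entries equal to $1$. The height of a rational matrix is the maximum of the naive heights $\max(|p|,|q|)$ of its entries $p/q$ in lowest terms. *)

theory Defs
  imports "Jordan_Normal_Form.Matrix"
begin

definition upper_unitriangular :: "nat \<Rightarrow> rat mat \<Rightarrow> bool" where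
  "upper_unitriangular m Y \<longleftrightarrow> Y \<in> carrier_mat m m \<and>
     (\<forall>i<m. Y $$ (i,i) = 1) \<and> (\<forall>i<m. \<forall>j<i. Y $$ (i,j) = 0)"

definition rat_height :: "rat \<Rightarrow> int" where
  "rat_height x = (case quotient_of x of (p, q) \<Rightarrow> max \<bar>p\<bar> \<bar>q\<bar>)"

definition mat_height :: "rat mat \<Rightarrow> int" where
  "mat_height Y = Max {rat_height (Y $$ (i,j)) | i j. i < dim_row Y \<and> j < dim_col Y}"

definition integral_mat :: "rat mat \<Rightarrow> bool" where
  "integral_mat Y \<longleftrightarrow> (\<forall>i<dim_row Y. \<forall>j<dim_col Y. Y $$ (i,j) \<in> \<int>)"

definition mat_prod_list :: "nat \<Rightarrow> rat mat list \<Rightarrow> rat mat" where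
  "mat_prod_list m Ys = foldr (\<lambda>A B. A * B) Ys (1\<^sub>m m)"

end

theory Submission
  imports Defs
begin

lemma height_entry:
  assumes "i < dim_row Y" "j < dim_col Y"
  shows "rat_height (Y $$ (i,j)) \<le> mat_height Y"
proof -
  have fin: "finite {rat_height (Y $$ (i,j)) | i j. i < dim_row Y \<and> j < dim_col Y}"
  proof -
    have "{rat_height (Y $$ (i,j)) | i j. i < dim_row Y \<and> j < dim_col Y}
       = (\<lambda>(i,j). rat_height (Y $$ (i,j))) ` ({..<dim_row Y} \<times> {..<dim_col Y})" by auto
    thus ?thesis by simp
  qed
  show ?thesis unfolding mat_height_def by (rule Max_ge[OF fin]) (use assms in auto)
qed

lemma rat_bounded_den_int:
  fixes x :: rat and C :: int
  assumes "rat_height x \<le> C"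
  shows "of_nat (fact (nat C)) * x \<in> \<int>"
proof -
  obtain p q where pq: "quotient_of x = (p,q)" by (cases "quotient_of x") auto
  have q0: "q > 0" using quotient_of_denom_pos[OF pq] .
  have xq: "x = of_int p / of_int q" using quotient_of_div[OF pq] .
  have "q \<le> C" using assms pq unfolding rat_height_def by auto
  hence "nat q \<le> nat C" by simp
  hence "nat q dvd fact (nat C)" using q0 by (intro dvd_fact) auto
  then obtain r where r: "fact (nat C) = nat q * r" by (auto elim: dvdE)
  have "(of_nat (fact (nat C)) :: rat) = of_int q * of_nat r"
    using r q0 by (simp add: of_nat_mult)
  hence "of_nat (fact (nat C)) * x = of_nat r * of_int p" using q0 xq by (simp add: field_simps)
  thus ?thesis by simp
qed

definition good :: "nat \<Rightarrow> nat \<Rightarrow> rat mat \<Rightarrow> bool" where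
  "good m s A \<longleftrightarrow> A \<in> carrier_mat m m \<and> (\<forall>i<m. \<forall>j<m. (j < i \<longrightarrow> A $$ (i,j) = 0) \<and>
      (i \<le> j \<longrightarrow> of_nat (s^(j-i)) * A $$ (i,j) \<in> \<int>))"

lemma good_one: "good m s (1\<^sub>m m)"
  unfolding good_def by auto

lemma good_mult:
  assumes A: "good m s A" and B: "good m s B"
  shows "good m s (A * B)"
proof -
  have Ac: "A \<in> carrier_mat m m" and Bc: "B \<in> carrier_mat m m" using A B by (auto simp: good_def)
  have entry: "(A * B) $$ (i,j) = (\<Sum>k\<in>{0..<m}. A $$ (i,k) * B $$ (k,j))" if "i<m" "j<m" for i j
    using that Ac Bc by (simp add: scalar_prod_def)
  show ?thesis unfolding good_def
  proof (intro conjI allI impI)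
    show "A * B \<in> carrier_mat m m" using Ac Bc by simp
  next
    fix i j assume ij: "i < m" "j < m" "j < i"
    have "\<And>k. k \<in> {0..<m} \<Longrightarrow> A $$ (i,k) * B $$ (k,j) = 0"
    proof -
      fix k assume k: "k \<in> {0..<m}"
      show "A $$ (i,k) * B $$ (k,j) = 0"
      proof (cases "k < i")
        case True thus ?thesis using A ij k by (auto simp: good_def)
      next
        case False thus ?thesis using B ij k by (auto simp: good_def)
      qed
    qed
    thus "(A * B) $$ (i,j) = 0" using entry ij by (simp add: sum.neutral)
  next
    fix i j assume ij: "i < m" "j < m" "i \<le> j"
    have "of_nat (s^(j-i)) * (A * B) $$ (i,j) = (\<Sum>k\<in>{0..<m}. of_nat (s^(j-i)) * (A $$ (i,k) * B $$ (k,j)))"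
      using entry ij by (simp add: sum_distrib_left)
    also have "\<dots> \<in> \<int>"
    proof (rule Ints_sum)
      fix k assume k: "k \<in> {0..<m}"
      show "of_nat (s^(j-i)) * (A $$ (i,k) * B $$ (k,j)) \<in> \<int>"
      proof (cases "k < i \<or> j < k")
        case True
        hence "A $$ (i,k) * B $$ (k,j) = 0" using A B ij k by (auto simp: good_def)
        thus ?thesis by (metis mult_zero_right Ints_0)
      next
        case False
        hence e: "s^(j-i) = s^(k-i) * s^(j-k)"
          by (simp add: power_add[symmetric])
        have "of_nat (s^(j-i)) * (A $$ (i,k) * B $$ (k,j)) =
              (of_nat (s^(k-i)) * A $$ (i,k)) * (of_nat (s^(j-k)) * B $$ (k,j))"
          by (simp add: e of_nat_mult)
        moreover have "of_nat (s^(k-i)) * A $$ (i,k) \<in> \<int>" using A ij k False by (auto simp: good_def)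
        moreover have "of_nat (s^(j-k)) * B $$ (k,j) \<in> \<int>" using B ij k False by (auto simp: good_def)
        ultimately show ?thesis by (metis Ints_mult)
      qed
    qed
    finally show "of_nat (s^(j-i)) * (A * B) $$ (i,j) \<in> \<int>" .
  qed
qed

lemma good_Y:
  assumes "upper_unitriangular m Y" "integral_mat (of_nat s \<cdot>\<^sub>m Y)"
  shows "good m s Y"
  unfolding good_def
proof (intro conjI allI impI)
  show Yc: "Y \<in> carrier_mat m m" using assms by (simp add: upper_unitriangular_def)
  fix i j assume ij: "i < m" "j < m"
  { assume "j < i" thus "Y $$ (i,j) = 0" using assms ij by (simp add: upper_unitriangular_def) }
  { assume le: "i \<le> j"
    show "of_nat (s^(j-i)) * Y $$ (i,j) \<in> \<int>"
    proof (cases "i = j")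
      case True thus ?thesis using assms ij by (simp add: upper_unitriangular_def)
    next
      case False
      hence e: "s^(j-i) = s^(j-i-1) * s" using le
        by (metis Suc_diff_Suc le_neq_implies_less mult.commute power_Suc diff_Suc_1 zero_less_diff)
      have "of_nat s * Y $$ (i,j) \<in> \<int>" using assms(2) ij Yc
        unfolding integral_mat_def by auto
      hence "of_nat (s^(j-i-1)) * (of_nat s * Y $$ (i,j)) \<in> \<int>" by simp
      thus ?thesis by (simp add: e of_nat_mult mult.assoc)
    qed }
qed

lemma good_final:
  assumes "good m s A"
  shows "integral_mat (of_nat (s ^ (m - 1)) \<cdot>\<^sub>m A)"
  unfolding integral_mat_def
proof (intro allI impI)
  have Ac: "A \<in> carrier_mat m m" using assms by (simp add: good_def)
  fix i j assume i: "i < dim_row (of_nat (s ^ (m - 1)) \<cdot>\<^sub>m A)" and j: "j < dim_col (of_nat (s ^ (m - 1)) \<cdot>\<^sub>m A)"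
  hence ij: "i < m" "j < m" using Ac by auto
  show "(of_nat (s ^ (m - 1)) \<cdot>\<^sub>m A) $$ (i,j) \<in> \<int>"
  proof (cases "j < i")
    case True thus ?thesis using assms ij Ac by (simp add: good_def)
  next
    case False
    hence e: "s^(m-1) = s^(m-1-(j-i)) * s^(j-i)" using ij by (simp add: power_add[symmetric])
    have "of_nat (s^(j-i)) * A $$ (i,j) \<in> \<int>" using assms ij False by (simp add: good_def)
    hence "of_nat (s^(m-1-(j-i))) * (of_nat (s^(j-i)) * A $$ (i,j)) \<in> \<int>" by simp
    moreover have e2: "rat_of_nat (s^(m-1)) = of_nat (s^(m-1-(j-i))) * of_nat (s^(j-i))"
      by (subst e) (simp only: of_nat_mult)
    moreover have "(of_nat (s ^ (m - 1)) \<cdot>\<^sub>m A) $$ (i,j) = rat_of_nat (s^(m-1)) * A $$ (i,j)"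
      using ij Ac by simp
    ultimately show ?thesis by (simp only: mult.assoc)
  qed
qed

theorem lemma8p3:
  fixes m :: nat and \<Y> :: "rat mat set" and C :: int
  assumes "m \<ge> 1"
    and "\<forall>Y\<in>\<Y>. upper_unitriangular m Y"
    and "\<forall>Y\<in>\<Y>. mat_height Y \<le> C"
  defines "s\<^sub>1 \<equiv> LEAST d::nat. d > 0 \<and> (\<forall>Y\<in>\<Y>. integral_mat (of_nat d \<cdot>\<^sub>m Y))"
  shows "\<forall>t::nat. \<forall>Ys. t > 0 \<longrightarrow> length Ys = t \<longrightarrow> set Ys \<subseteq> \<Y> \<longrightarrow>
           integral_mat (of_nat (s\<^sub>1 ^ (m - 1)) \<cdot>\<^sub>m mat_prod_list m Ys)"
proof -
  have ex: "\<exists>d::nat. d > 0 \<and> (\<forall>Y\<in>\<Y>. integral_mat (of_nat d \<cdot>\<^sub>m Y))"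
  proof (intro exI conjI ballI)
    show "fact (nat C) > (0::nat)" by simp
    fix Y assume Y: "Y \<in> \<Y>"
    show "integral_mat (of_nat (fact (nat C)) \<cdot>\<^sub>m Y)" unfolding integral_mat_def
    proof (intro allI impI)
      fix i j assume "i < dim_row (of_nat (fact (nat C)) \<cdot>\<^sub>m Y)" "j < dim_col (of_nat (fact (nat C)) \<cdot>\<^sub>m Y)"
      hence ij: "i < dim_row Y" "j < dim_col Y" by auto
      have "rat_height (Y $$ (i,j)) \<le> C" using height_entry[OF ij] assms(3) Y by fastforce
      from rat_bounded_den_int[OF this] show "(of_nat (fact (nat C)) \<cdot>\<^sub>m Y) $$ (i,j) \<in> \<int>"
        using ij by simp
    qed
  qed
  have s: "\<forall>Y\<in>\<Y>. integral_mat (of_nat s\<^sub>1 \<cdot>\<^sub>m Y)"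
    unfolding s\<^sub>1_def using LeastI_ex[OF ex] by blast
  have "good m s\<^sub>1 (mat_prod_list m Ys)" if "set Ys \<subseteq> \<Y>" for Ys
    using that
  proof (induction Ys)
    case Nil thus ?case by (simp add: mat_prod_list_def good_one)
  next
    case (Cons Y Ys)
    hence gY: "good m s\<^sub>1 Y" using good_Y assms(2) s by auto
    have "good m s\<^sub>1 (mat_prod_list m Ys)" using Cons by auto
    from good_mult[OF gY this] show ?case by (simp add: mat_prod_list_def)
  qed
  thus ?thesis using good_final by blast
qed

end
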